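(* Let $\Lambda\Subset\mathbb X$, let $Y\Subset\mathbb X$, let $\preceq$ be an arbitrary total order on $Y$ (strict part $\prec$), and suppose that $Z(\Lambda\mid\{y'\in Y\mid y'\prec y\})\neq0$ for all $y\in Y$. Then \[ R(Y,\Lambda)=\prod_{y\in Y}R\big(y,\Lambda\ \big|\ \{y'\in Y\mid y'\prec y\}\big). \]
   Context: $\mathbb X$ is a finite or countably infinite set, $X\Subset\mathbb X$ means finite subset, $\mathbf F$ is the set of finite subsets of $\mathbb X$. Fix $z:\mathbb X\to\mathbb C$, $W:\mathbf F\to\mathbb C$; $z^X=\prod_{y\in X}z(y)$; singletons $\{y\}$ are written $y$ inside arguments. Conditional interaction: $W(X\mid B)=\prod_{C\subset B}W(X\cup C)$ if $X\cap B=\varnothing$, $W(X\mid B)=0$ if $X=\{y\}$ with $y\in B$, and $W(X\mid B)=1$ otherwise. Boltzmann factor $\kappa(X\mid B)=\prod_{\varnothing\neq S\subset X}W(S\mid B)$. Partition functions $Z(X,\Lambda\mid B)=\sum_{Y'\subset\Lambda\setminus X}z^{X\cup Y'}\kappa(X\cup Y'\mid B)$, $Z(\Lambda\mid B)=Z(\varnothing,\Lambda\mid B)$, with $B$ omitted when $B=\varnothing$. Correlations $R(X,\Lambda\mid B)=Z(X,\Lambda\mid B)/Z(\Lambda\mid B)$ when $Z(\Lambda\mid B)\neq0$ (note $X$ need not be a subset of $\Lambda$). *)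

theory Defs
  imports Complex_Main "HOL-Library.Countable"
begin

text \<open>The ground set is a countable type 'a; z is the activity, W the interaction.
  Singletons y are written {y}.\<close>

definition zpow :: "('a \<Rightarrow> complex) \<Rightarrow> 'a set \<Rightarrow> complex" where
  "zpow z X = (\<Prod>y\<in>X. z y)"

definition condW :: "('a set \<Rightarrow> complex) \<Rightarrow> 'a set \<Rightarrow> 'a set \<Rightarrow> complex" where
  "condW W X B =
     (if X \<inter> B = {} then (\<Prod>C\<in>Pow B. W (X \<union> C))
      else if (\<exists>y. X = {y} \<and> y \<in> B) then 0 else 1)"

definition kappa :: "('a set \<Rightarrow> complex) \<Rightarrow> 'a set \<Rightarrow> 'a set \<Rightarrow> complex" where
  "kappa W X B = (\<Prod>S\<in>Pow X - {{}}. condW W S B)"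

definition Zpart :: "('a \<Rightarrow> complex) \<Rightarrow> ('a set \<Rightarrow> complex) \<Rightarrow> 'a set \<Rightarrow> 'a set \<Rightarrow> 'a set \<Rightarrow> complex" where
  "Zpart z W X \<Lambda> B = (\<Sum>Y'\<in>Pow (\<Lambda> - X). zpow z (X \<union> Y') * kappa W (X \<union> Y') B)"

text \<open>Correlation R(X, Lambda | B) = Z(X,Lambda|B)/Z(Lambda|B) (meaningful when the denominator is nonzero).\<close>
definition Rcorr :: "('a \<Rightarrow> complex) \<Rightarrow> ('a set \<Rightarrow> complex) \<Rightarrow> 'a set \<Rightarrow> 'a set \<Rightarrow> 'a set \<Rightarrow> complex" where
  "Rcorr z W X \<Lambda> B = Zpart z W X \<Lambda> B / Zpart z W {} \<Lambda> B"

end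

theory Submission
  imports Defs
begin

lemma kappa_prod:
  assumes "finite X" "finite B" "X \<inter> B = {}"
  shows "kappa W X B = (\<Prod>U\<in>{U\<in>Pow (X \<union> B). U \<inter> X \<noteq> {}}. W U)"
proof -
  have "kappa W X B = (\<Prod>S\<in>Pow X - {{}}. \<Prod>C\<in>Pow B. W (S \<union> C))"
    unfolding kappa_def
    by (rule prod.cong) (use assms in \<open>auto simp: condW_def\<close>)
  also have "\<dots> = (\<Prod>(S,C)\<in>(Pow X - {{}}) \<times> Pow B. W (S \<union> C))"
    by (rule prod.cartesian_product)
  also have "\<dots> = (\<Prod>U\<in>{U\<in>Pow (X \<union> B). U \<inter> X \<noteq> {}}. W U)"
    by (rule prod.reindex_bij_witness[where i="\<lambda>U. (U \<inter> X, U \<inter> B)" and j="\<lambda>(S,C). S \<union> C"])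
       (use assms in auto)
  finally show ?thesis .
qed

lemma kappa_split:
  assumes "finite X" "finite Y" "finite B" "X \<inter> B = {}" "Y \<inter> B = {}" "X \<inter> Y = {}"
  shows "kappa W (X \<union> Y) B = kappa W X B * kappa W Y (X \<union> B)"
proof -
  have e: "{U\<in>Pow (X \<union> Y \<union> B). U \<inter> (X \<union> Y) \<noteq> {}}
     = {U\<in>Pow (X \<union> B). U \<inter> X \<noteq> {}} \<union> {U\<in>Pow (Y \<union> (X \<union> B)). U \<inter> Y \<noteq> {}}"
    by auto
  have d1: "(X \<union> Y) \<inter> B = {}" "Y \<inter> (X \<union> B) = {}" using assms by auto
  have "kappa W (X \<union> Y) B = (\<Prod>U\<in>{U\<in>Pow (X \<union> Y \<union> B). U \<inter> (X \<union> Y) \<noteq> {}}. W U)"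
    using kappa_prod[of "X \<union> Y" B W] d1 assms by simp
  also have "\<dots> = (\<Prod>U\<in>{U\<in>Pow (X \<union> B). U \<inter> X \<noteq> {}}. W U) * (\<Prod>U\<in>{U\<in>Pow (Y \<union> (X \<union> B)). U \<inter> Y \<noteq> {}}. W U)"
    unfolding e by (rule prod.union_disjoint) (use assms in auto)
  also have "\<dots> = kappa W X B * kappa W Y (X \<union> B)"
    using kappa_prod[of X B W] kappa_prod[of Y "X \<union> B" W] d1 assms by simp
  finally show ?thesis .
qed

lemma kappa_zero:
  assumes "finite Y" "y \<in> Y" "y \<in> B"
  shows "kappa W Y B = 0"
  unfolding kappa_def
  apply (rule prod_zero)
  using assms by (auto intro!: bexI[where x="{y}"] simp: condW_def)

lemma Zpart_empty_restrict:
  assumes "finite \<Lambda>"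
  shows "Zpart z W {} \<Lambda> B = (\<Sum>Y'\<in>Pow (\<Lambda> - B). zpow z Y' * kappa W Y' B)"
  unfolding Zpart_def
  apply simp
  apply (rule sum.mono_neutral_right)
  using assms apply simp
   apply blast
  apply (rule ballI)
  subgoal for Y'
  proof -
    assume "Y' \<in> Pow \<Lambda> - Pow (\<Lambda> - B)" then have a: "Y' \<in> Pow \<Lambda>" "Y' \<notin> Pow (\<Lambda> - B)" by auto
    then obtain y where "y \<in> Y'" "y \<in> B" by blast
    moreover have "finite Y'" using a assms by (auto dest: finite_subset)
    ultimately show ?thesis by (simp add: kappa_zero)
  qed
  done

lemma zpow_union: "finite X \<Longrightarrow> finite Y \<Longrightarrow> X \<inter> Y = {} \<Longrightarrow> zpow z (X \<union> Y) = zpow z X * zpow z Y"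
  unfolding zpow_def by (rule prod.union_disjoint)

lemma Zpart_decomp:
  assumes "finite \<Lambda>" "finite X" "finite B" "X \<inter> B = {}"
  shows "Zpart z W X \<Lambda> B = zpow z X * kappa W X B * Zpart z W {} \<Lambda> (X \<union> B)"
proof -
  have "Zpart z W X \<Lambda> B = (\<Sum>Y'\<in>Pow (\<Lambda> - X - B). zpow z (X \<union> Y') * kappa W (X \<union> Y') B)"
    unfolding Zpart_def
    apply (rule sum.mono_neutral_right)
    using assms apply simp
     apply blast
    apply (rule ballI)
    subgoal for Y'
    proof -
      assume "Y' \<in> Pow (\<Lambda> - X) - Pow (\<Lambda> - X - B)" then have a: "Y' \<in> Pow (\<Lambda> - X)" "Y' \<notin> Pow (\<Lambda> - X - B)" by auto
      then obtain y where "y \<in> X \<union> Y'" "y \<in> B" by blast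
      moreover have "finite (X \<union> Y')" using a assms by (auto dest: finite_subset)
      ultimately show ?thesis by (simp add: kappa_zero)
    qed
    done
  also have "\<dots> = (\<Sum>Y'\<in>Pow (\<Lambda> - X - B). zpow z X * kappa W X B * (zpow z Y' * kappa W Y' (X \<union> B)))"
  proof (rule sum.cong)
    fix Y' assume "Y' \<in> Pow (\<Lambda> - X - B)"
    then have h: "Y' \<subseteq> \<Lambda>" "Y' \<inter> X = {}" "Y' \<inter> B = {}" "finite Y'" using assms by (auto dest: finite_subset)
    show "zpow z (X \<union> Y') * kappa W (X \<union> Y') B = zpow z X * kappa W X B * (zpow z Y' * kappa W Y' (X \<union> B))"
      using h assms by (simp add: zpow_union kappa_split Int_commute)
  qed simp
  also have "\<dots> = zpow z X * kappa W X B * Zpart z W {} \<Lambda> (X \<union> B)"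
    using assms by (simp add: Zpart_empty_restrict sum_distrib_left Diff_eq Int_ac Un_ac)
  finally show ?thesis .
qed

lemma has_max:
  assumes "finite Y" "Y \<noteq> {}" "trans r" "total_on Y r"
  shows "\<exists>m\<in>Y. \<forall>y\<in>Y. y \<noteq> m \<longrightarrow> (y, m) \<in> r"
  using assms
proof (induction Y rule: finite_ne_induct)
  case (singleton x) then show ?case by auto
next
  case (insert x F)
  then obtain m where m: "m \<in> F" "\<forall>y\<in>F. y \<noteq> m \<longrightarrow> (y, m) \<in> r"
    by (meson subset_insertI total_on_subset)
  show ?case
  proof (cases "(m, x) \<in> r")
    case True
    then show ?thesis using m insert.prems(1) unfolding trans_def by (metis insert_iff)
  next
    case False
    then have "(x, m) \<in> r" using insert m unfolding total_on_def by auto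
    then show ?thesis using m by auto
  qed
qed

lemma main_ind:
  assumes "finite Y" "trans r" "antisym r" "total_on Y r" "finite \<Lambda>"
  shows "kappa W Y {} = (\<Prod>y\<in>Y. kappa W {y} {y'\<in>Y. (y', y) \<in> r \<and> y' \<noteq> y}) \<and>
    Zpart z W {} \<Lambda> Y * (\<Prod>y\<in>Y. Zpart z W {} \<Lambda> {y'\<in>Y. (y', y) \<in> r \<and> y' \<noteq> y})
    = Zpart z W {} \<Lambda> {} * (\<Prod>y\<in>Y. Zpart z W {} \<Lambda> (insert y {y'\<in>Y. (y', y) \<in> r \<and> y' \<noteq> y}))"
  using assms
proof (induction Y rule: finite_psubset_induct)
  case (psubset Y)
  show ?case
  proof (cases "Y = {}")
    case True then show ?thesis by (simp add: kappa_def)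
  next
    case False
    then obtain m where m: "m \<in> Y" "\<forall>y\<in>Y. y \<noteq> m \<longrightarrow> (y, m) \<in> r"
      using has_max psubset by blast
    define Y0 where "Y0 = Y - {m}"
    have Y: "Y = insert m Y0" "m \<notin> Y0" "finite Y0" using m psubset Y0_def by auto
    have "Y0 \<subset> Y" using Y by auto
    have tot: "total_on Y0 r" using psubset Y0_def by (meson Diff_subset total_on_subset)
    note IH = psubset.IH[OF \<open>Y0 \<subset> Y\<close> psubset.prems(1,2) tot psubset.prems(4)]
    have Bm: "{y'\<in>Y. (y', m) \<in> r \<and> y' \<noteq> m} = Y0" using m Y0_def by auto
    have By: "{y'\<in>Y. (y', y) \<in> r \<and> y' \<noteq> y} = {y'\<in>Y0. (y', y) \<in> r \<and> y' \<noteq> y}" if "y \<in> Y0" for y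
      using that m psubset.prems(2) Y0_def unfolding antisym_def by auto
    have p1: "(\<Prod>y\<in>Y. f y {y'\<in>Y. (y', y) \<in> r \<and> y' \<noteq> y}) = f m Y0 * (\<Prod>y\<in>Y0. f y {y'\<in>Y0. (y', y) \<in> r \<and> y' \<noteq> y})" for f :: "'a \<Rightarrow> 'a set \<Rightarrow> complex"
      using Y Bm By by (simp add: prod.insert cong: prod.cong)
    have k: "kappa W Y {} = kappa W Y0 {} * kappa W {m} Y0"
      using kappa_split[of Y0 "{m}" "{}" W] Y by simp
    have "insert m Y0 = Y" using Y by simp
    show ?thesis
      using IH k p1[of "\<lambda>y B. kappa W {y} B"] p1[of "\<lambda>y B. Zpart z W {} \<Lambda> B"]
        p1[of "\<lambda>y B. Zpart z W {} \<Lambda> (insert y B)"] \<open>insert m Y0 = Y\<close>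
      by (simp add: algebra_simps)
  qed
qed

theorem lemma4p4:
  fixes z :: "'a::countable \<Rightarrow> complex" and W :: "'a set \<Rightarrow> complex"
    and \<Lambda> Y :: "'a set" and r :: "('a \<times> 'a) set"
  assumes "finite \<Lambda>" and "finite Y"
    and "linear_order_on Y r"
    and "\<And>y. y \<in> Y \<Longrightarrow> Zpart z W {} \<Lambda> {y'\<in>Y. (y', y) \<in> r \<and> y' \<noteq> y} \<noteq> 0"
    and "Zpart z W {} \<Lambda> {} \<noteq> 0"
  shows "Rcorr z W Y \<Lambda> {} = (\<Prod>y\<in>Y. Rcorr z W {y} \<Lambda> {y'\<in>Y. (y', y) \<in> r \<and> y' \<noteq> y})"
proof -
  define Bf where "Bf y = {y'\<in>Y. (y', y) \<in> r \<and> y' \<noteq> y}" for y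
  have lo: "trans r" "antisym r" "total_on Y r"
    using assms(3) unfolding linear_order_on_def partial_order_on_def preorder_on_def by auto
  have fB: "finite (Bf y)" for y using assms(2) unfolding Bf_def by simp
  have yB: "y \<notin> Bf y" for y unfolding Bf_def by simp
  note MI = main_ind[OF assms(2) lo assms(1), of W z]
  have D: "(\<Prod>y\<in>Y. Zpart z W {} \<Lambda> (Bf y)) \<noteq> 0"
    using assms(4) by (simp add: Bf_def prod_zero_iff[OF assms(2)])
  have "(\<Prod>y\<in>Y. Rcorr z W {y} \<Lambda> (Bf y))
     = (\<Prod>y\<in>Y. z y * kappa W {y} (Bf y) * Zpart z W {} \<Lambda> (insert y (Bf y)) / Zpart z W {} \<Lambda> (Bf y))"
    unfolding Rcorr_def
  proof (rule prod.cong)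
    fix y assume "y \<in> Y"
    have "Zpart z W {y} \<Lambda> (Bf y) = zpow z {y} * kappa W {y} (Bf y) * Zpart z W {} \<Lambda> ({y} \<union> Bf y)"
      by (rule Zpart_decomp[OF assms(1)]) (use fB yB in auto)
    then show "Zpart z W {y} \<Lambda> (Bf y) / Zpart z W {} \<Lambda> (Bf y) =
      z y * kappa W {y} (Bf y) * Zpart z W {} \<Lambda> (insert y (Bf y)) / Zpart z W {} \<Lambda> (Bf y)"
      by (simp add: zpow_def)
  qed simp
  also have "\<dots> = zpow z Y * (\<Prod>y\<in>Y. kappa W {y} (Bf y)) * (\<Prod>y\<in>Y. Zpart z W {} \<Lambda> (insert y (Bf y)))
       / (\<Prod>y\<in>Y. Zpart z W {} \<Lambda> (Bf y))"
    by (simp add: prod_dividef prod.distrib zpow_def)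
  also have "\<dots> = zpow z Y * kappa W Y {} * Zpart z W {} \<Lambda> Y / Zpart z W {} \<Lambda> {}"
    using MI D assms(5) unfolding Bf_def by (simp add: field_simps)
  also have "\<dots> = Rcorr z W Y \<Lambda> {}"
  proof -
    have "Zpart z W Y \<Lambda> {} = zpow z Y * kappa W Y {} * Zpart z W {} \<Lambda> (Y \<union> {})"
      by (rule Zpart_decomp[OF assms(1) assms(2)]) auto
    then show ?thesis unfolding Rcorr_def by simp
  qed
  finally show ?thesis unfolding Bf_def by simp
qed

end
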